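(* Under Assumption 1, almost surely, for all sufficiently large $N^*$ the true partition $\mathcal{X}^*$ belongs to $\mathscr{C}$ and is the unique minimizer of $D$ over $\mathscr{C}$; i.e., $\arg\min_{\mathcal{Y}\in\mathscr{C}}D(\mathcal{Y})\to\mathcal{X}^*$ almost surely.
   Context: $X$ is finite, $\mathscr{A}$ the nonempty subsets. True probabilities $\bar p$ form a nondegenerate NSC with representation $(v,u,\mathcal{X}^* )$, $\mathcal{X}^*=\{X_1,\dots,X_K\}$, $K\ge2$: $\bar p(a,A)=\frac{v(A\cap X_i)}{\sum_j v(A\cap X_j)}\frac{u(a)}{\sum_{b\in A\cap X_i}u(b)}$ for $a\in A\cap X_i$, $u>0$, $v(\emptyset)=0$, $\bar p(a,A)>0$ for $a\in A$; nondegenerate: at most one $i$ for which some $a\in X_i$ satisfies $\frac{\sum_{x\in A_i}u(x)}{v(A_i)}=\frac{u(a)}{v(\{a\})}$ for all $A_i\subseteq X_i$ containing $a$. Data: for each menu $A$, $N_A$ independent choices from $\bar p(\cdot,A)$, independent across menus; $p(a,A)$ the observed frequency; $N^*=\min_A N_A\to\infty$ along nested samples. $p(A',A)=\sum_{a\in A'}p(a,A)$, $r_A(A',B')=p(A',A)/p(B',A)$, $\bar r_A$ likewise with $\bar p$, $r_A(a,b)=r_A(\{a\},\{b\})$. $D=D_1+D_2$ where, for a partition $\mathcal{Y}$: $D_1(\mathcal{Y})$ is the average over tuples $(Y,A,B,a,b)$ with $Y\in\mathcal{Y}$, $a,b\in A\cap B\cap Y$ of $(\log r_A(a,b)-\log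 r_B(a,b))^2$; $D_2(\mathcal{Y})$ is the average over tuples $(Y,Y',A,B)$ with $Y,Y'\in\mathcal{Y}$, $A\cap Y=B\cap Y\ne\emptyset$, $A\cap Y'=B\cap Y'\ne\emptyset$ of $(\log r_A(Y,Y')-\log r_B(Y,Y'))^2$. $d(a,b)$ is the average over $(A,B)$ with $a,b\in A\cap B$ of $(\log r_A(a,b)-\log r_B(a,b))^2$; $\bar\epsilon=\max_{a,b}d(a,b)$; $a\sim_\epsilon b$ iff $d(a,b)<\epsilon$; $\mathscr{C}=\{X/\!\sim_\epsilon:\epsilon\in(0,\bar\epsilon],\ \sim_\epsilon\text{ transitive}\}$. Assumption 1: for all distinct $i,j\le K$, every nonempty $A_i\subsetneq X_i$ and nonempty $A_j\subseteq X_j$, there exist $A,B\in\mathscr{A}$ with $A_i\cup A_j\subseteq A\cap B$ and $\bar r_A(A_i,A_j)\ne\bar r_B(A_i,A_j)$. *)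

theory Defs
  imports "HOL-Probability.Probability"
begin

text \<open>The finite set of alternatives X is the (finite) universe of the type 'a.
  Menus are the nonempty subsets.\<close>

definition menus :: "'a set set" where
  "menus = {A. A \<noteq> {}}"

definition is_partition :: "'a set set \<Rightarrow> bool" where
  "is_partition Ys \<longleftrightarrow> {} \<notin> Ys \<and> \<Union>Ys = UNIV \<and>
     (\<forall>Y\<in>Ys. \<forall>Y'\<in>Ys. Y \<noteq> Y' \<longrightarrow> Y \<inter> Y' = {})"

definition is_NSC :: "'a set set \<Rightarrow> ('a set \<Rightarrow> real) \<Rightarrow> ('a \<Rightarrow> real) \<Rightarrow> ('a \<Rightarrow> 'a set \<Rightarrow> real) \<Rightarrow> bool" where
  "is_NSC Xs v u pbar \<longleftrightarrow> is_partition Xs \<and> (\<forall>a. u a > 0) \<and> v {} = 0 \<and>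
     (\<forall>A\<in>menus. \<forall>Xi\<in>Xs. \<forall>a\<in>A \<inter> Xi.
        pbar a A = v (A \<inter> Xi) / (\<Sum>Xj\<in>Xs. v (A \<inter> Xj)) * (u a / (\<Sum>b\<in>A \<inter> Xi. u b))) \<and>
     (\<forall>A\<in>menus. \<forall>a\<in>A. pbar a A > 0)"

definition nondegenerate :: "'a set set \<Rightarrow> ('a set \<Rightarrow> real) \<Rightarrow> ('a \<Rightarrow> real) \<Rightarrow> bool" where
  "nondegenerate Xs v u \<longleftrightarrow>
     card {Xi\<in>Xs. \<exists>a\<in>Xi. \<forall>Ai. Ai \<subseteq> Xi \<and> a \<in> Ai \<longrightarrow>
        (\<Sum>x\<in>Ai. u x) / v Ai = u a / v {a}} \<le> 1"

definition pset :: "('a \<Rightarrow> 'a set \<Rightarrow> real) \<Rightarrow> 'a set \<Rightarrow> 'a set \<Rightarrow> real" where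
  "pset p A' A = (\<Sum>a\<in>A'. p a A)"

definition rat :: "('a \<Rightarrow> 'a set \<Rightarrow> real) \<Rightarrow> 'a set \<Rightarrow> 'a set \<Rightarrow> 'a set \<Rightarrow> real" where
  "rat p A A' B' = pset p A' A / pset p B' A"

definition assumption1 :: "'a set set \<Rightarrow> ('a \<Rightarrow> 'a set \<Rightarrow> real) \<Rightarrow> bool" where
  "assumption1 Xs pbar \<longleftrightarrow>
     (\<forall>Xi\<in>Xs. \<forall>Xj\<in>Xs. Xi \<noteq> Xj \<longrightarrow>
        (\<forall>Ai Aj. Ai \<noteq> {} \<and> Ai \<subset> Xi \<and> Aj \<noteq> {} \<and> Aj \<subseteq> Xj \<longrightarrow>
           (\<exists>A\<in>menus. \<exists>B\<in>menus. Ai \<union> Aj \<subseteq> A \<inter> B \<and>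
               rat pbar A Ai Aj \<noteq> rat pbar B Ai Aj)))"

definition avg :: "('b \<Rightarrow> real) \<Rightarrow> 'b set \<Rightarrow> real" where
  "avg f S = (\<Sum>x\<in>S. f x) / real (card S)"

definition D1 :: "('a \<Rightarrow> 'a set \<Rightarrow> real) \<Rightarrow> 'a set set \<Rightarrow> real" where
  "D1 p Ys = avg (\<lambda>(Y, A, B, a, b). (ln (rat p A {a} {b}) - ln (rat p B {a} {b}))\<^sup>2)
     {(Y, A, B, a, b). Y \<in> Ys \<and> A \<in> menus \<and> B \<in> menus \<and> a \<in> A \<inter> B \<inter> Y \<and> b \<in> A \<inter> B \<inter> Y}"

definition D2 :: "('a \<Rightarrow> 'a set \<Rightarrow> real) \<Rightarrow> 'a set set \<Rightarrow> real" where
  "D2 p Ys = avg (\<lambda>(Y, Y', A, B). (ln (rat p A Y Y') - ln (rat p B Y Y'))\<^sup>2)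
     {(Y, Y', A, B). Y \<in> Ys \<and> Y' \<in> Ys \<and> A \<in> menus \<and> B \<in> menus \<and>
        A \<inter> Y = B \<inter> Y \<and> A \<inter> Y \<noteq> {} \<and> A \<inter> Y' = B \<inter> Y' \<and> A \<inter> Y' \<noteq> {}}"

definition DD :: "('a \<Rightarrow> 'a set \<Rightarrow> real) \<Rightarrow> 'a set set \<Rightarrow> real" where
  "DD p Ys = D1 p Ys + D2 p Ys"

definition dist_ab :: "('a \<Rightarrow> 'a set \<Rightarrow> real) \<Rightarrow> 'a \<Rightarrow> 'a \<Rightarrow> real" where
  "dist_ab p a b = avg (\<lambda>(A, B). (ln (rat p A {a} {b}) - ln (rat p B {a} {b}))\<^sup>2)
     {(A, B). A \<in> menus \<and> B \<in> menus \<and> a \<in> A \<inter> B \<and> b \<in> A \<inter> B}"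

definition epsbar :: "('a \<Rightarrow> 'a set \<Rightarrow> real) \<Rightarrow> real" where
  "epsbar p = Max {dist_ab p a b | a b. True}"

definition simrel :: "('a \<Rightarrow> 'a set \<Rightarrow> real) \<Rightarrow> real \<Rightarrow> 'a rel" where
  "simrel p \<epsilon> = {(a, b). dist_ab p a b < \<epsilon>}"

definition cands :: "('a \<Rightarrow> 'a set \<Rightarrow> real) \<Rightarrow> 'a set set set" where
  "cands p = {UNIV // simrel p \<epsilon> | \<epsilon>. 0 < \<epsilon> \<and> \<epsilon> \<le> epsbar p \<and> trans (simrel p \<epsilon>)}"

text \<open>Observed frequencies in the n-th sample: Ch A k is the k-th recorded choice from menu A,
  the n-th (nested) sample uses the first N A n of them.\<close>
definition freq :: "('a set \<Rightarrow> nat \<Rightarrow> 'w \<Rightarrow> 'a) \<Rightarrow> ('a set \<Rightarrow> nat \<Rightarrow> nat) \<Rightarrow> nat \<Rightarrow> 'w \<Rightarrow> 'a \<Rightarrow> 'a set \<Rightarrow> real" where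
  "freq Ch N n \<omega> a A = real (card {k. k < N A n \<and> Ch A k \<omega> = a}) / real (N A n)"

end

theory Submission
  imports Defs
begin


lemma hoeff_step:
  fixes Z :: "'i \<Rightarrow> 'w \<Rightarrow> real" and g :: "nat \<Rightarrow> 'i" and \<mu> \<delta> :: real
  assumes P: "prob_space M"
  and ind: "prob_space.indep_vars M (\<lambda>_. borel) Z J"
  and g: "inj g" "range g \<subseteq> J"
  and bnd: "\<And>i \<omega>. Z i \<omega> \<in> {0..1}"
  and mean: "\<And>k. prob_space.expectation M (Z (g k)) = \<mu>"
  and d: "\<delta> > 0"
  shows "AE \<omega> in M. eventually (\<lambda>m. \<omega> \<in> space M - {\<omega>\<in>space M. m \<ge> 1 \<and> \<bar>(\<Sum>k<m. Z (g k) \<omega>) - m * \<mu>\<bar> \<ge> m * \<delta>}) sequentially"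
proof -
  interpret prob_space M by fact
  define E where "E m = {\<omega>\<in>space M. m \<ge> 1 \<and> \<bar>(\<Sum>k<m. Z (g k) \<omega>) - m * \<mu>\<bar> \<ge> m * \<delta>}" for m :: nat
  have rv: "random_variable borel (Z i)" if "i \<in> J" for i
    using ind that unfolding indep_vars_def by blast
  have meas: "E m \<in> sets M" for m
  proof -
    have "(\<lambda>\<omega>. (\<Sum>k<m. Z (g k) \<omega>)) \<in> borel_measurable M"
      using rv g(2) by (intro borel_measurable_sum) auto
    then show ?thesis unfolding E_def by measurable
  qed
  have bound: "prob (E m) \<le> 2 * exp (-2 * \<delta>\<^sup>2) ^ m" for m
  proof (cases "m = 0")
    case True then show ?thesis by (simp add: E_def)
  next
    case False
    interpret H: Hoeffding_ineq M "g ` {..<m}" Z "\<lambda>_. 0" "\<lambda>_. 1" "(\<Sum>i\<in>g ` {..<m}. expectation (Z i))"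
    proof unfold_locales
      show "finite (g ` {..<m})" by simp
      show "indep_vars (\<lambda>_. borel) Z (g ` {..<m})"
        using g(2) by (intro indep_vars_subset[OF ind]) auto
      fix i show "AE x in M. Z i x \<in> {0..1}" using bnd by simp
    qed simp
    have inj: "inj_on g {..<m}" using g(1) by (simp add: inj_on_def inj_def)
    have s1: "(\<Sum>i\<in>g ` {..<m}. Z i x) = (\<Sum>k<m. Z (g k) x)" for x
      using sum.reindex[OF inj] by simp
    have s2: "(\<Sum>i\<in>g ` {..<m}. expectation (Z i)) = m * \<mu>"
      by (simp add: sum.reindex[OF inj] mean)
    have s3: "(\<Sum>i\<in>g ` {..<m}. ((1::real) - 0)\<^sup>2) = m"
      using card_image[OF inj] by simp
    have "E m = {x\<in>space M. \<bar>(\<Sum>i\<in>g ` {..<m}. Z i x) - (\<Sum>i\<in>g ` {..<m}. expectation (Z i))\<bar> \<ge> m * \<delta>}"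
      unfolding E_def s1 s2 using False by auto
    also have "prob \<dots> \<le> 2 * exp (-2 * (m*\<delta>)\<^sup>2 / (\<Sum>i\<in>g ` {..<m}. ((1::real) - 0)\<^sup>2))"
      by (rule H.Hoeffding_ineq_abs_ge) (use d False s3 in auto)
    also have "-2 * (m*\<delta>)\<^sup>2 / (\<Sum>i\<in>g ` {..<m}. ((1::real) - 0)\<^sup>2) = m * (-2 * \<delta>\<^sup>2)"
      unfolding s3 using False by (simp add: power2_eq_square field_simps)
    also have "exp (m * (-2 * \<delta>\<^sup>2)) = exp (-2 * \<delta>\<^sup>2) ^ m"
      by (subst exp_of_nat_mult[symmetric]) simp
    finally show ?thesis .
  qed
  have "summable (\<lambda>m. 2 * exp (-2 * \<delta>\<^sup>2) ^ m)"
    using d by (intro summable_mult summable_geometric) auto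
  then have "summable (\<lambda>m. measure M (E m))"
    by (rule summable_comparison_test'[where N=0]) (use bound in auto)
  then have "AE x in M. eventually (\<lambda>n. x \<in> space M - E n) sequentially"
    by (intro borel_cantelli_AE1 meas) (auto simp: emeasure_eq_measure)
  then show ?thesis unfolding E_def .
qed

lemma slln01:
  fixes Z :: "'i \<Rightarrow> 'w \<Rightarrow> real" and g :: "nat \<Rightarrow> 'i" and \<mu> :: real
  assumes P: "prob_space M"
  and ind: "prob_space.indep_vars M (\<lambda>_. borel) Z J"
  and g: "inj g" "range g \<subseteq> J"
  and bnd: "\<And>i \<omega>. Z i \<omega> \<in> {0..1}"
  and mean: "\<And>k. prob_space.expectation M (Z (g k)) = \<mu>"
  shows "AE \<omega> in M. (\<lambda>m. (\<Sum>k<m. Z (g k) \<omega>) / real m) \<longlonglongrightarrow> \<mu>"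
proof -
  have "AE \<omega> in M. \<forall>j::nat. eventually (\<lambda>m. \<omega> \<in> space M - {\<omega>\<in>space M. m \<ge> 1 \<and> \<bar>(\<Sum>k<m. Z (g k) \<omega>) - m * \<mu>\<bar> \<ge> m * (1 / Suc j)}) sequentially"
    unfolding AE_all_countable
    by (intro allI hoeff_step[OF P ind g bnd mean]) simp
  then show ?thesis
  proof (rule AE_mp, intro AE_I2 impI)
    fix \<omega> assume H: "\<forall>j::nat. eventually (\<lambda>m. \<omega> \<in> space M - {\<omega>\<in>space M. m \<ge> 1 \<and> \<bar>(\<Sum>k<m. Z (g k) \<omega>) - m * \<mu>\<bar> \<ge> m * (1 / Suc j)}) sequentially"
    show "(\<lambda>m. (\<Sum>k<m. Z (g k) \<omega>) / real m) \<longlonglongrightarrow> \<mu>"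
    proof (rule LIMSEQ_I)
      fix r :: real assume r: "0 < r"
      obtain j where j: "inverse (real (Suc j)) < r" using ex_inverse_of_nat_less[OF r] by (metis Suc_pred of_nat_Suc)
      from H[rule_format, of j] obtain N where N: "\<And>m. m \<ge> N \<Longrightarrow> \<omega> \<in> space M - {\<omega>\<in>space M. m \<ge> 1 \<and> \<bar>(\<Sum>k<m. Z (g k) \<omega>) - m * \<mu>\<bar> \<ge> m * (1 / Suc j)}"
        unfolding eventually_sequentially by blast
      show "\<exists>no. \<forall>n\<ge>no. norm ((\<Sum>k<n. Z (g k) \<omega>) / real n - \<mu>) < r"
      proof (intro exI allI impI)
        fix n assume n: "max N 1 \<le> n"
        then have n1: "n \<ge> 1" and nN: "n \<ge> N" by auto
        from N[OF nN] n1 have lt: "\<bar>(\<Sum>k<n. Z (g k) \<omega>) - n * \<mu>\<bar> < n * (1 / Suc j)" by auto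
        have npos: "real n > 0" using n1 by simp
        have "norm ((\<Sum>k<n. Z (g k) \<omega>) / real n - \<mu>) = \<bar>(\<Sum>k<n. Z (g k) \<omega>) - n * \<mu>\<bar> / n"
          using npos by (simp add: field_simps abs_divide)
        also have "\<dots> < 1 / Suc j" using lt npos by (simp add: divide_less_eq mult.commute)
        also have "\<dots> < r" using j by (simp add: inverse_eq_divide)
        finally show "norm ((\<Sum>k<n. Z (g k) \<omega>) / real n - \<mu>) < r" .
      qed
    qed
  qed
qed

lemma freq_conv:
  fixes pbar :: "'a::finite \<Rightarrow> 'a set \<Rightarrow> real"
    and M :: "'w measure"
    and Ch :: "'a set \<Rightarrow> nat \<Rightarrow> 'w \<Rightarrow> 'a"
    and N :: "'a set \<Rightarrow> nat \<Rightarrow> nat"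
  assumes prob: "prob_space M"
    and indep: "prob_space.indep_vars M (\<lambda>_. count_space UNIV) (\<lambda>(A, k). Ch A k) (menus \<times> UNIV)"
    and distr: "\<forall>A\<in>menus. \<forall>k. \<forall>a\<in>A. measure M {\<omega> \<in> space M. Ch A k \<omega> = a} = pbar a A"
    and Nstar: "filterlim (\<lambda>n. Min ((\<lambda>A. N A n) ` menus)) at_top sequentially"
    and sum1: "\<forall>A\<in>menus. (\<Sum>a\<in>A. pbar a A) = 1"
  shows "AE \<omega> in M. \<forall>A\<in>menus. \<forall>a. (\<lambda>n. freq Ch N n \<omega> a A) \<longlonglongrightarrow> (if a \<in> A then pbar a A else 0)"
proof -
  interpret prob_space M by fact
  have rv: "random_variable (count_space UNIV) (Ch A k)" if "A \<in> menus" for A k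
    using indep that unfolding indep_vars_def by auto
  have ev: "{\<omega> \<in> space M. Ch A k \<omega> = a} \<in> events" if "A \<in> menus" for A k a
  proof -
    have "Ch A k -` {a} \<inter> space M \<in> events" by (rule measurable_sets[OF rv[OF that]]) simp
    moreover have "Ch A k -` {a} \<inter> space M = {\<omega> \<in> space M. Ch A k \<omega> = a}" by auto
    ultimately show ?thesis by simp
  qed
  have pr: "prob {\<omega> \<in> space M. Ch A k \<omega> = a} = (if a \<in> A then pbar a A else 0)" if A: "A \<in> menus" for A k a
  proof (cases "a \<in> A")
    case True then show ?thesis using distr A by auto
  next
    case False
    let ?E = "\<lambda>b. {\<omega> \<in> space M. Ch A k \<omega> = b}"
    have "prob (\<Union>b\<in>insert a A. ?E b) = (\<Sum>b\<in>insert a A. prob (?E b))"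
      by (intro finite_measure_finite_Union) (auto simp: ev[OF A] disjoint_family_on_def)
    also have "\<dots> = prob (?E a) + 1" using False sum1 distr A by simp
    finally have "prob (?E a) + 1 \<le> 1" by (metis prob_le_1)
    then show ?thesis using False by (simp add: measure_nonneg antisym)
  qed
  have one: "AE \<omega> in M. (\<lambda>n. freq Ch N n \<omega> a A) \<longlonglongrightarrow> (if a \<in> A then pbar a A else 0)"
    if A: "A \<in> menus" for A a
  proof -
    define Z where "Z = (\<lambda>i x. (\<lambda>c. if c = a then 1 else (0::real)) ((\<lambda>(A, k). Ch A k) i x))"
    have indZ: "indep_vars (\<lambda>_. borel) Z (menus \<times> UNIV)"
      unfolding Z_def by (rule indep_vars_compose2[OF indep]) simp
    have ZA: "Z (A, k) x = (if Ch A k x = a then 1 else 0)" for k x by (simp add: Z_def)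
    have mean: "expectation (Z (A, k)) = (if a \<in> A then pbar a A else 0)" for k
    proof -
      have "expectation (Z (A, k)) = expectation (indicator {\<omega> \<in> space M. Ch A k \<omega> = a})"
        by (intro Bochner_Integration.integral_cong) (auto simp: ZA indicator_def)
      also have "\<dots> = prob {\<omega> \<in> space M. Ch A k \<omega> = a}"
        by (simp add: Int_absorb2)
      finally show ?thesis using pr[OF A] by simp
    qed
    have L: "AE \<omega> in M. (\<lambda>m. (\<Sum>k<m. Z ((\<lambda>k. (A, k)) k) \<omega>) / real m) \<longlonglongrightarrow> (if a \<in> A then pbar a A else 0)"
      by (rule slln01[OF prob indZ]) (auto simp: inj_def A mean, auto simp: Z_def)
    have NA: "filterlim (\<lambda>n. N A n) at_top sequentially"
      by (rule filterlim_at_top_mono[OF Nstar], intro always_eventually allI Min_le) (auto simp: A)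
    show ?thesis
    proof (rule AE_mp[OF L], intro AE_I2 impI)
      fix \<omega> assume H: "(\<lambda>m. (\<Sum>k<m. Z ((\<lambda>k. (A, k)) k) \<omega>) / real m) \<longlonglongrightarrow> (if a \<in> A then pbar a A else 0)"
      have eq: "freq Ch N n \<omega> a A = (\<lambda>m. (\<Sum>k<m. Z ((\<lambda>k. (A, k)) k) \<omega>) / real m) (N A n)" for n
      proof -
        have "(\<Sum>k<N A n. Z (A, k) \<omega>) = real (card {k. k < N A n \<and> Ch A k \<omega> = a})"
          by (simp add: ZA sum.If_cases Int_def conj_commute)
        then show ?thesis by (simp add: freq_def)
      qed
      show "(\<lambda>n. freq Ch N n \<omega> a A) \<longlonglongrightarrow> (if a \<in> A then pbar a A else 0)"
        unfolding eq using filterlim_compose[OF H NA] by (simp add: comp_def)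
    qed
  qed
  show ?thesis
  proof (intro AE_finite_allI)
    fix A :: "'a set" assume A: "A \<in> menus"
    show "AE \<omega> in M. \<forall>a. (\<lambda>n. freq Ch N n \<omega> a A) \<longlonglongrightarrow> (if a \<in> A then pbar a A else 0)"
      unfolding AE_all_countable using one[OF A] by blast
  qed simp
qed



lemma avg_nonneg: "(\<And>x. x \<in> S \<Longrightarrow> f x \<ge> 0) \<Longrightarrow> avg f S \<ge> 0"
  unfolding avg_def by (intro divide_nonneg_nonneg sum_nonneg) auto

lemma avg_pos:
  assumes "finite S" "\<And>x. x \<in> S \<Longrightarrow> f x \<ge> 0" "z \<in> S" "f z > 0"
  shows "avg f S > 0"
proof -
  have "sum f S > 0" using assms by (intro sum_pos2[of S z]) auto
  moreover have "card S > 0" using assms by (auto simp: card_gt_0_iff)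
  ultimately show ?thesis unfolding avg_def by simp
qed

lemma avg_zero: "(\<And>x. x \<in> S \<Longrightarrow> f x = 0) \<Longrightarrow> avg f S = 0"
  unfolding avg_def by simp

lemma tendsto_avg:
  assumes "\<And>x. x \<in> S \<Longrightarrow> ((\<lambda>n. f n x) \<longlongrightarrow> g x) F"
  shows "((\<lambda>n. avg (f n) S) \<longlongrightarrow> avg g S) F"
  unfolding avg_def unfolding divide_inverse by (intro tendsto_mult_right tendsto_sum assms)

lemma sq_ln_pos: "x > 0 \<Longrightarrow> y > 0 \<Longrightarrow> x \<noteq> y \<Longrightarrow> (ln x - ln y)\<^sup>2 > (0::real)"
  by simp

lemma pset_single[simp]: "pset p {a} A = p a A"
  by (simp add: pset_def)

lemma dist_self: "dist_ab p a a = 0"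
proof -
  have "ln (rat p A {a} {a}) = 0" for A
    by (cases "p a A = 0") (simp_all add: rat_def)
  then show ?thesis unfolding dist_ab_def by (intro avg_zero) auto
qed

lemma term_tendsto:
  fixes P :: "nat \<Rightarrow> 'a \<Rightarrow> 'a set \<Rightarrow> real"
  assumes conv: "\<And>a. (\<lambda>n. P n a A) \<longlonglongrightarrow> q a A" "\<And>a. (\<lambda>n. P n a B) \<longlonglongrightarrow> q a B"
    and fin: "finite Y" "finite Y'"
    and nz: "pset q Y A \<noteq> 0" "pset q Y' A \<noteq> 0" "pset q Y B \<noteq> 0" "pset q Y' B \<noteq> 0"
    and pos: "rat q A Y Y' > 0" "rat q B Y Y' > 0"
  shows "(\<lambda>n. (ln (rat (P n) A Y Y') - ln (rat (P n) B Y Y'))\<^sup>2) \<longlonglongrightarrow> (ln (rat q A Y Y') - ln (rat q B Y Y'))\<^sup>2"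
proof -
  have ps: "(\<lambda>n. pset (P n) Z C) \<longlonglongrightarrow> pset q Z C" if "C = A \<or> C = B" for Z C
    unfolding pset_def using that conv by (auto intro!: tendsto_sum)
  have r: "(\<lambda>n. rat (P n) C Y Y') \<longlonglongrightarrow> rat q C Y Y'" if "C = A \<or> C = B" and "pset q Y' C \<noteq> 0" for C
    unfolding rat_def by (intro tendsto_divide ps that)
  show ?thesis
    using pos nz by (intro tendsto_intros r) auto
qed

locale nscset =
  fixes Xs :: "('a::finite) set set" and v :: "'a set \<Rightarrow> real" and u :: "'a \<Rightarrow> real"
    and pbar :: "'a \<Rightarrow> 'a set \<Rightarrow> real"
  assumes nsc: "is_NSC Xs v u pbar"
    and nondeg: "nondegenerate Xs v u"
    and K2: "card Xs \<ge> 2"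
    and A1: "assumption1 Xs pbar"
begin

definition "q a A = (if a \<in> A then pbar a A else 0)"
definition "S A = (\<Sum>Xj\<in>Xs. v (A \<inter> Xj))"

lemma part: "is_partition Xs" using nsc by (simp add: is_NSC_def)
lemma upos: "u a > 0" using nsc by (simp add: is_NSC_def)
lemma v0: "v {} = 0" using nsc by (simp add: is_NSC_def)
lemma formula: "A \<in> menus \<Longrightarrow> Xi \<in> Xs \<Longrightarrow> a \<in> A \<inter> Xi \<Longrightarrow>
   pbar a A = v (A \<inter> Xi) / S A * (u a / (\<Sum>b\<in>A \<inter> Xi. u b))"
  using nsc unfolding is_NSC_def S_def by blast
lemma ppos: "A \<in> menus \<Longrightarrow> a \<in> A \<Longrightarrow> pbar a A > 0"
  using nsc unfolding is_NSC_def by blast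

lemma blk_ex: "\<exists>X\<in>Xs. x \<in> X" using part unfolding is_partition_def by blast
lemma blk_uniq: "X \<in> Xs \<Longrightarrow> Y \<in> Xs \<Longrightarrow> x \<in> X \<Longrightarrow> x \<in> Y \<Longrightarrow> X = Y"
  using part unfolding is_partition_def by blast
lemma blk_ne: "X \<in> Xs \<Longrightarrow> X \<noteq> {}" using part unfolding is_partition_def by blast

lemma menus_iff: "A \<in> menus \<longleftrightarrow> A \<noteq> {}" by (simp add: menus_def)

lemma q_nonneg: "q a A \<ge> 0"
proof (cases "a \<in> A")
  case True
  then have "A \<in> menus" by (auto simp: menus_iff)
  then show ?thesis using ppos[of A a] True by (simp add: q_def)
qed (simp add: q_def)

lemma sum_one_block: "(\<Sum>X\<in>Xs. if a \<in> X then c else 0) = (c::real)"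
proof -
  obtain X0 where X0: "X0 \<in> Xs" "a \<in> X0" using blk_ex by blast
  have "(\<Sum>X\<in>Xs. if a \<in> X then c else 0) = (\<Sum>X\<in>Xs. if X = X0 then c else 0)"
    by (intro sum.cong refl) (use X0 blk_uniq in auto)
  also have "\<dots> = c" using X0 by simp
  finally show ?thesis .
qed

lemma sum_blocks: "(\<Sum>X\<in>Xs. \<Sum>a\<in>A \<inter> X. f a) = (\<Sum>a\<in>A. (f a :: real))"
proof -
  have "(\<Sum>X\<in>Xs. \<Sum>a\<in>A \<inter> X. f a) = (\<Sum>X\<in>Xs. \<Sum>a\<in>A. if a \<in> X then f a else 0)"
    by (rule sum.cong[OF refl]) (simp add: sum.inter_restrict[of A f])
  also have "\<dots> = (\<Sum>a\<in>A. \<Sum>X\<in>Xs. if a \<in> X then f a else 0)" by (rule sum.swap)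
  also have "\<dots> = (\<Sum>a\<in>A. f a)" by (simp add: sum_one_block)
  finally show ?thesis .
qed

lemma S_nz: assumes "A \<in> menus" shows "S A \<noteq> 0"
proof
  assume S0: "S A = 0"
  obtain a where a: "a \<in> A" using assms by (auto simp: menus_iff)
  obtain X where X: "X \<in> Xs" "a \<in> X" using blk_ex by blast
  have "pbar a A = 0" using formula[OF assms X(1)] a X S0 by simp
  with ppos[OF assms a] show False by simp
qed

lemma block_sum: assumes "A \<in> menus" "Xi \<in> Xs"
  shows "(\<Sum>a\<in>A \<inter> Xi. pbar a A) = v (A \<inter> Xi) / S A"
proof (cases "A \<inter> Xi = {}")
  case True then show ?thesis by (simp add: v0)
next
  case False
  have U: "(\<Sum>b\<in>A \<inter> Xi. u b) > 0" using False upos by (intro sum_pos) auto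
  have "(\<Sum>a\<in>A \<inter> Xi. pbar a A) = (\<Sum>a\<in>A \<inter> Xi. v (A \<inter> Xi) / S A / (\<Sum>b\<in>A \<inter> Xi. u b) * u a)"
    by (intro sum.cong refl) (simp add: formula[OF assms])
  also have "\<dots> = v (A \<inter> Xi) / S A / (\<Sum>b\<in>A \<inter> Xi. u b) * (\<Sum>a\<in>A \<inter> Xi. u a)"
    by (simp add: sum_distrib_left)
  also have "\<dots> = v (A \<inter> Xi) / S A" using U by simp
  finally show ?thesis .
qed

lemma sum1: assumes "A \<in> menus" shows "(\<Sum>a\<in>A. pbar a A) = 1"
proof -
  have "(\<Sum>a\<in>A. pbar a A) = (\<Sum>X\<in>Xs. \<Sum>a\<in>A \<inter> X. pbar a A)" by (simp add: sum_blocks)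
  also have "\<dots> = (\<Sum>X\<in>Xs. v (A \<inter> X) / S A)" by (intro sum.cong refl block_sum assms)
  also have "\<dots> = S A / S A" by (simp add: S_def sum_divide_distrib[symmetric])
  also have "\<dots> = 1" using S_nz[OF assms] by simp
  finally show ?thesis .
qed

lemma pset_q: "pset q Y A = (\<Sum>a\<in>A \<inter> Y. pbar a A)"
proof -
  have "(\<Sum>a\<in>Y \<inter> A. pbar a A) = (\<Sum>a\<in>Y. if a \<in> A then pbar a A else 0)"
    by (rule sum.inter_restrict) simp
  then show ?thesis by (simp add: pset_def q_def Int_commute)
qed

lemma pset_q_pos: assumes "A \<inter> Y \<noteq> {}" shows "pset q Y A > 0"
proof -
  have A: "A \<in> menus" using assms by (auto simp: menus_iff)
  show ?thesis unfolding pset_q using assms ppos[OF A] by (intro sum_pos) auto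
qed

lemma rat_q_pos: "A \<inter> Y \<noteq> {} \<Longrightarrow> A \<inter> Y' \<noteq> {} \<Longrightarrow> rat q A Y Y' > 0"
  unfolding rat_def using pset_q_pos by simp

lemma rat_q_eq: "Y \<union> Y' \<subseteq> A \<Longrightarrow> rat q A Y Y' = rat pbar A Y Y'"
  unfolding rat_def pset_def q_def by (auto intro!: arg_cong2[where f="(/)"] sum.cong)

lemma rat_same_block: assumes "A \<in> menus" "Xi \<in> Xs" "a \<in> A \<inter> Xi" "b \<in> A \<inter> Xi"
  shows "rat q A {a} {b} = u a / u b"
proof -
  define c where "c = v (A \<inter> Xi) / S A / (\<Sum>b\<in>A \<inter> Xi. u b)"
  have pa: "pbar a A = c * u a" and pb: "pbar b A = c * u b"
    using formula[OF assms(1,2)] assms(3,4) by (simp_all add: c_def)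
  have "pbar a A > 0" using ppos assms by auto
  then have "c \<noteq> 0" using pa by auto
  then show ?thesis using assms(3,4) upos[of b] by (simp add: rat_def q_def pa pb)
qed

lemma rat_blocks: assumes "A \<in> menus" "Xi \<in> Xs" "Xj \<in> Xs"
  shows "rat q A Xi Xj = v (A \<inter> Xi) / v (A \<inter> Xj)"
  unfolding rat_def pset_q block_sum[OF assms(1,2)] block_sum[OF assms(1,3)]
  using S_nz[OF assms(1)] by simp

lemma cross_diff:
  assumes X: "Xi \<in> Xs" "Xj \<in> Xs" "Xi \<noteq> Xj" "a \<in> Xi" "b \<in> Xj"
  shows "\<exists>A B. A \<in> menus \<and> B \<in> menus \<and> a \<in> A \<and> b \<in> A \<and> a \<in> B \<and> b \<in> B \<and>
              rat q A {a} {b} \<noteq> rat q B {a} {b}"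
proof (cases "{a} \<subset> Xi")
  case True
  note h = A1[unfolded assumption1_def, THEN bspec, OF X(1), THEN bspec, OF X(2), THEN mp, OF X(3)]
  obtain A B where AB: "A \<in> menus" "B \<in> menus" "{a} \<union> {b} \<subseteq> A \<inter> B"
    "rat pbar A {a} {b} \<noteq> rat pbar B {a} {b}"
  proof -
    have pre: "{a} \<noteq> {} \<and> {a} \<subset> Xi \<and> {b} \<noteq> {} \<and> {b} \<subseteq> Xj" using True X(5) by simp
    show ?thesis using h[rule_format, OF pre] that by blast
  qed
  have ab: "a \<in> A" "b \<in> A" "a \<in> B" "b \<in> B" using AB(3) by auto
  have "rat q A {a} {b} \<noteq> rat q B {a} {b}"
    using AB(4) rat_q_eq[of "{a}" "{b}" A] rat_q_eq[of "{a}" "{b}" B] ab by simp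
  then show ?thesis using AB(1,2) ab by blast
next
  case F1: False
  show ?thesis
  proof (cases "{b} \<subset> Xj")
    case True
    note h = A1[unfolded assumption1_def, THEN bspec, OF X(2), THEN bspec, OF X(1), THEN mp, OF X(3)[symmetric]]
    obtain A B where AB: "A \<in> menus" "B \<in> menus" "{b} \<union> {a} \<subseteq> A \<inter> B"
      "rat pbar A {b} {a} \<noteq> rat pbar B {b} {a}"
    proof -
      have pre: "{b} \<noteq> {} \<and> {b} \<subset> Xj \<and> {a} \<noteq> {} \<and> {a} \<subseteq> Xi" using True X(4) by simp
      show ?thesis using h[rule_format, OF pre] that by blast
    qed
    have ab: "a \<in> A" "b \<in> A" "a \<in> B" "b \<in> B" using AB(3) by auto
    have "rat q A {a} {b} \<noteq> rat q B {a} {b}"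
    proof
      assume "rat q A {a} {b} = rat q B {a} {b}"
      then have "inverse (rat q A {a} {b}) = inverse (rat q B {a} {b})" by simp
      then have "rat q A {b} {a} = rat q B {b} {a}" by (simp add: rat_def)
      then show False using AB(4) rat_q_eq[of "{b}" "{a}" A] rat_q_eq[of "{b}" "{a}" B] ab by simp
    qed
    then show ?thesis using AB(1,2) ab by blast
  next
    case False
    have Xi: "Xi = {a}" using F1 X(4) by blast
    have Xj: "Xj = {b}" using False X(5) by blast
    let ?D = "{Xi\<in>Xs. \<exists>a\<in>Xi. \<forall>Ai. Ai \<subseteq> Xi \<and> a \<in> Ai \<longrightarrow>
        (\<Sum>x\<in>Ai. u x) / v Ai = u a / v {a}}"
    have sing: "{c} \<in> ?D" if "{c} \<in> Xs" for c
    proof -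
      have "(\<Sum>x\<in>Ai. u x) / v Ai = u c / v {c}" if "Ai \<subseteq> {c}" "c \<in> Ai" for Ai
      proof -
        have "Ai = {c}" using that by blast
        then show ?thesis by simp
      qed
      then show ?thesis using that by blast
    qed
    have "{Xi, Xj} \<subseteq> ?D" using sing X(1,2) Xi Xj by auto
    then have "card {Xi, Xj} \<le> card ?D" by (intro card_mono) auto
    moreover have "card ?D \<le> 1" using nondeg unfolding nondegenerate_def .
    ultimately show ?thesis using X(3) by simp
  qed
qed

definition "T1 Ys = {(Y, A, B, a, b). Y \<in> Ys \<and> A \<in> menus \<and> B \<in> menus \<and> a \<in> A \<inter> B \<inter> Y \<and> b \<in> A \<inter> B \<inter> Y}"
definition "T2 Ys = {(Y, Y', A, B). Y \<in> Ys \<and> Y' \<in> Ys \<and> A \<in> menus \<and> B \<in> menus \<and>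
        A \<inter> Y = B \<inter> Y \<and> A \<inter> Y \<noteq> {} \<and> A \<inter> Y' = B \<inter> Y' \<and> A \<inter> Y' \<noteq> {}}"
definition "f1 p = (\<lambda>(Y, A, B, a, b). (ln (rat p A {a} {b}) - ln (rat p B {a} {b}))\<^sup>2)"
definition "f2 p = (\<lambda>(Y, Y', A, B). (ln (rat p A Y Y') - ln (rat p B Y Y'))\<^sup>2)"

lemma D1_eq: "D1 p Ys = avg (f1 p) (T1 Ys)" unfolding D1_def T1_def f1_def ..
lemma D2_eq: "D2 p Ys = avg (f2 p) (T2 Ys)" unfolding D2_def T2_def f2_def ..

lemma D1_nonneg: "D1 p Ys \<ge> 0" unfolding D1_eq by (intro avg_nonneg) (auto simp: f1_def)
lemma D2_nonneg: "D2 p Ys \<ge> 0" unfolding D2_eq by (intro avg_nonneg) (auto simp: f2_def)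

lemma DD_Xs: "DD q Xs = 0"
proof -
  have "D1 q Xs = 0" unfolding D1_eq
  proof (intro avg_zero)
    fix x assume "x \<in> T1 Xs"
    then obtain Y A B a b where x: "x = (Y, A, B, a, b)" "Y \<in> Xs" "A \<in> menus" "B \<in> menus"
      "a \<in> A \<inter> B \<inter> Y" "b \<in> A \<inter> B \<inter> Y" unfolding T1_def by blast
    show "f1 q x = 0" using x rat_same_block[of A Y a b] rat_same_block[of B Y a b] by (simp add: f1_def)
  qed
  moreover have "D2 q Xs = 0" unfolding D2_eq
  proof (intro avg_zero)
    fix x assume "x \<in> T2 Xs"
    then obtain Y Y' A B where x: "x = (Y, Y', A, B)" "Y \<in> Xs" "Y' \<in> Xs" "A \<in> menus" "B \<in> menus"
      "A \<inter> Y = B \<inter> Y" "A \<inter> Y' = B \<inter> Y'" unfolding T2_def by blast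
    show "f2 q x = 0" using x rat_blocks[of A Y Y'] rat_blocks[of B Y Y'] by (simp add: f2_def)
  qed
  ultimately show ?thesis by (simp add: DD_def)
qed

lemma dist_same: "X \<in> Xs \<Longrightarrow> a \<in> X \<Longrightarrow> b \<in> X \<Longrightarrow> dist_ab q a b = 0"
  unfolding dist_ab_def by (intro avg_zero) (auto simp: rat_same_block)

lemma dist_cross:
  assumes X: "Xi \<in> Xs" "Xj \<in> Xs" "Xi \<noteq> Xj" "a \<in> Xi" "b \<in> Xj"
  shows "dist_ab q a b > 0"
proof -
  obtain A B where AB: "A \<in> menus" "B \<in> menus" "a \<in> A" "b \<in> A" "a \<in> B" "b \<in> B"
    "rat q A {a} {b} \<noteq> rat q B {a} {b}" using cross_diff[OF X] by blast
  show ?thesis unfolding dist_ab_def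
  proof (rule avg_pos[where z="(A, B)"])
    show "0 < (case (A, B) of (A, B) \<Rightarrow> (ln (rat q A {a} {b}) - ln (rat q B {a} {b}))\<^sup>2)"
      using AB rat_q_pos[of A "{a}" "{b}"] rat_q_pos[of B "{a}" "{b}"] by (simp del: pset_single)
  qed (use AB in auto)
qed


lemma DD_pos:
  assumes ne: "{} \<notin> Ys" and cov: "\<Union>Ys = UNIV" and neq: "Ys \<noteq> Xs"
  shows "DD q Ys > 0"
proof (cases "\<exists>Y\<in>Ys. \<exists>a\<in>Y. \<exists>b\<in>Y. \<exists>Xi\<in>Xs. \<exists>Xj\<in>Xs. Xi \<noteq> Xj \<and> a \<in> Xi \<and> b \<in> Xj")
  case True
  then obtain Y a b Xi Xj where Y: "Y \<in> Ys" "a \<in> Y" "b \<in> Y" "Xi \<in> Xs" "Xj \<in> Xs" "Xi \<noteq> Xj" "a \<in> Xi" "b \<in> Xj"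
    by blast
  obtain A B where AB: "A \<in> menus" "B \<in> menus" "a \<in> A" "b \<in> A" "a \<in> B" "b \<in> B"
    "rat q A {a} {b} \<noteq> rat q B {a} {b}" using cross_diff[OF Y(4-8)] by blast
  have "D1 q Ys > 0" unfolding D1_eq
  proof (rule avg_pos[where z="(Y, A, B, a, b)"])
    show "(Y, A, B, a, b) \<in> T1 Ys" using Y AB by (simp add: T1_def)
    show "0 < f1 q (Y, A, B, a, b)"
      using AB rat_q_pos[of A "{a}" "{b}"] rat_q_pos[of B "{a}" "{b}"] by (simp add: f1_def del: pset_single)
  qed (auto simp: f1_def)
  then show ?thesis using D2_nonneg[of q Ys] by (simp add: DD_def)
next
  case False
  have sub: "\<exists>X\<in>Xs. Y \<subseteq> X" if YY: "Y \<in> Ys" for Y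
  proof -
    obtain a where a: "a \<in> Y" using YY ne by (metis all_not_in_conv)
    obtain X where X: "X \<in> Xs" "a \<in> X" using blk_ex by blast
    have "Y \<subseteq> X"
    proof
      fix b assume b: "b \<in> Y"
      obtain Xb where Xb: "Xb \<in> Xs" "b \<in> Xb" using blk_ex by blast
      have "Xb = X" using False YY a b X Xb by blast
      then show "b \<in> X" using Xb by simp
    qed
    then show ?thesis using X by blast
  qed
  have "\<exists>Y\<in>Ys. Y \<notin> Xs"
  proof (rule ccontr)
    assume "\<not> ?thesis"
    then have YX: "Ys \<subseteq> Xs" by blast
    have "Xs \<subseteq> Ys"
    proof
      fix X assume X: "X \<in> Xs"
      obtain x where x: "x \<in> X" using blk_ne[OF X] by blast
      obtain Y where Y: "Y \<in> Ys" "x \<in> Y" using cov by blast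
      have "Y = X" using blk_uniq[of Y X x] YX Y X x by blast
      then show "X \<in> Ys" using Y by simp
    qed
    then show False using YX neq by blast
  qed
  then obtain Y where Y: "Y \<in> Ys" "Y \<notin> Xs" by blast
  obtain Xi where Xi: "Xi \<in> Xs" "Y \<subseteq> Xi" using sub[OF Y(1)] by blast
  have Yne: "Y \<noteq> {}" using Y ne by blast
  have Ypr: "Y \<subset> Xi" using Xi Y by blast
  have "\<exists>Xj\<in>Xs. Xj \<noteq> Xi"
  proof (rule ccontr)
    assume "\<not> ?thesis"
    then have "Xs \<subseteq> {Xi}" by blast
    then have "card Xs \<le> 1" using card_mono[of "{Xi}" Xs] by simp
    then show False using K2 by simp
  qed
  then obtain Xj where Xj: "Xj \<in> Xs" "Xj \<noteq> Xi" by blast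
  obtain x where x: "x \<in> Xj" using blk_ne[OF Xj(1)] by blast
  obtain Y' where Y': "Y' \<in> Ys" "x \<in> Y'" using cov by blast
  obtain Xk where Xk: "Xk \<in> Xs" "Y' \<subseteq> Xk" using sub[OF Y'(1)] by blast
  have "Xk = Xj" using blk_uniq[of Xk Xj x] Xk Xj x Y' by blast
  with Xk have Y'sub: "Y' \<subseteq> Xj" by simp
  have Y'ne: "Y' \<noteq> {}" using Y' by blast
  note h = A1[unfolded assumption1_def, THEN bspec, OF Xi(1), THEN bspec, OF Xj(1), THEN mp, OF Xj(2)[symmetric]]
  have pre: "Y \<noteq> {} \<and> Y \<subset> Xi \<and> Y' \<noteq> {} \<and> Y' \<subseteq> Xj" using Yne Ypr Y'ne Y'sub by simp
  obtain A B where AB: "A \<in> menus" "B \<in> menus" "Y \<union> Y' \<subseteq> A \<inter> B"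
    "rat pbar A Y Y' \<noteq> rat pbar B Y Y'"
    using h[rule_format, OF pre] by blast
  have s: "Y \<union> Y' \<subseteq> A" "Y \<union> Y' \<subseteq> B" using AB(3) by auto
  have i: "A \<inter> Y = Y" "B \<inter> Y = Y" "A \<inter> Y' = Y'" "B \<inter> Y' = Y'" using s by auto
  have "D2 q Ys > 0" unfolding D2_eq
  proof (rule avg_pos[where z="(Y, Y', A, B)"])
    show "(Y, Y', A, B) \<in> T2 Ys" using Y(1) Y'(1) AB(1,2) i Yne Y'ne by (simp add: T2_def)
    have "rat q A Y Y' \<noteq> rat q B Y Y'" using AB(4) rat_q_eq[OF s(1)] rat_q_eq[OF s(2)] by simp
    then show "0 < f2 q (Y, Y', A, B)"
      using rat_q_pos[of A Y Y'] rat_q_pos[of B Y Y'] i Yne Y'ne by (simp add: f2_def)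
  qed (auto simp: f2_def)
  then show ?thesis using D1_nonneg[of q Ys] by (simp add: DD_def)
qed

context
  fixes P :: "nat \<Rightarrow> 'a \<Rightarrow> 'a set \<Rightarrow> real"
  assumes conv: "\<forall>A\<in>menus. \<forall>a. (\<lambda>n. P n a A) \<longlonglongrightarrow> q a A"
begin

lemma conv_pair:
  assumes "A \<in> menus" "B \<in> menus" "A \<inter> Y \<noteq> {}" "A \<inter> Y' \<noteq> {}" "B \<inter> Y \<noteq> {}" "B \<inter> Y' \<noteq> {}"
  shows "(\<lambda>n. (ln (rat (P n) A Y Y') - ln (rat (P n) B Y Y'))\<^sup>2) \<longlonglongrightarrow> (ln (rat q A Y Y') - ln (rat q B Y Y'))\<^sup>2"
proof (rule term_tendsto)
  show "(\<lambda>n. P n a A) \<longlonglongrightarrow> q a A" "(\<lambda>n. P n a B) \<longlonglongrightarrow> q a B" for a using conv assms by auto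
  show "pset q Y A \<noteq> 0" "pset q Y' A \<noteq> 0" "pset q Y B \<noteq> 0" "pset q Y' B \<noteq> 0"
    using pset_q_pos[OF assms(3)] pset_q_pos[OF assms(4)] pset_q_pos[OF assms(5)] pset_q_pos[OF assms(6)] by simp_all
  show "rat q A Y Y' > 0" "rat q B Y Y' > 0" using rat_q_pos assms by auto
qed simp_all

lemma conv_DD: "(\<lambda>n. DD (P n) Ys) \<longlonglongrightarrow> DD q Ys"
proof -
  have "(\<lambda>n. D1 (P n) Ys) \<longlonglongrightarrow> D1 q Ys" unfolding D1_eq
  proof (rule tendsto_avg)
    fix x assume "x \<in> T1 Ys"
    then obtain Y A B a b where x: "x = (Y, A, B, a, b)" "A \<in> menus" "B \<in> menus"
      "a \<in> A \<inter> B" "b \<in> A \<inter> B" unfolding T1_def by blast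
    show "(\<lambda>n. f1 (P n) x) \<longlonglongrightarrow> f1 q x"
      unfolding x f1_def using x by (simp del: pset_single, intro conv_pair) auto
  qed
  moreover have "(\<lambda>n. D2 (P n) Ys) \<longlonglongrightarrow> D2 q Ys" unfolding D2_eq
  proof (rule tendsto_avg)
    fix x assume "x \<in> T2 Ys"
    then obtain Y Y' A B where x: "x = (Y, Y', A, B)" "A \<in> menus" "B \<in> menus"
      "A \<inter> Y = B \<inter> Y" "A \<inter> Y \<noteq> {}" "A \<inter> Y' = B \<inter> Y'" "A \<inter> Y' \<noteq> {}" unfolding T2_def by blast
    show "(\<lambda>n. f2 (P n) x) \<longlonglongrightarrow> f2 q x"
      unfolding x f2_def using x by (simp, intro conv_pair) auto
  qed
  ultimately show ?thesis unfolding DD_def by (rule tendsto_add)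
qed

lemma conv_dist: "(\<lambda>n. dist_ab (P n) a b) \<longlonglongrightarrow> dist_ab q a b"
  unfolding dist_ab_def
proof (rule tendsto_avg)
  fix x assume "x \<in> {(A, B). A \<in> menus \<and> B \<in> menus \<and> a \<in> A \<inter> B \<and> b \<in> A \<inter> B}"
  then obtain A B where x: "x = (A, B)" "A \<in> menus" "B \<in> menus" "a \<in> A \<inter> B" "b \<in> A \<inter> B" by blast
  show "(\<lambda>n. case x of (A, B) \<Rightarrow> (ln (rat (P n) A {a} {b}) - ln (rat (P n) B {a} {b}))\<^sup>2)
        \<longlonglongrightarrow> (case x of (A, B) \<Rightarrow> (ln (rat q A {a} {b}) - ln (rat q B {a} {b}))\<^sup>2)"
    unfolding x using x by (simp del: pset_single, intro conv_pair) auto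
qed


lemma quot_cover:
  assumes "Ys \<in> cands p"
  shows "{} \<notin> Ys" "\<Union>Ys = UNIV"
proof -
  obtain e where e: "Ys = UNIV // simrel p e" "0 < e" using assms unfolding cands_def by blast
  have refl: "(x, x) \<in> simrel p e" for x using e(2) by (simp add: simrel_def dist_self)
  show "{} \<notin> Ys" using refl unfolding e(1) quotient_def by blast
  show "\<Union>Ys = UNIV" using refl unfolding e(1) quotient_def by blast
qed

lemma det_main:
  "eventually (\<lambda>n. Xs \<in> cands (P n) \<and> (\<forall>Ys\<in>cands (P n). Ys \<noteq> Xs \<longrightarrow> DD (P n) Xs < DD (P n) Ys)) sequentially"
proof -
  define R where "R = {(a, b). \<exists>X\<in>Xs. a \<in> X \<and> b \<in> X}"
  define C where "C = {(a, b). (a, b) \<notin> R}"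
  have Cpos: "dist_ab q a b > 0" if "(a, b) \<in> C" for a b
  proof -
    obtain Xi where Xi: "Xi \<in> Xs" "a \<in> Xi" using blk_ex by blast
    obtain Xj where Xj: "Xj \<in> Xs" "b \<in> Xj" using blk_ex by blast
    have "Xi \<noteq> Xj" using that Xi Xj unfolding C_def R_def by blast
    then show ?thesis using dist_cross Xi Xj by blast
  qed
  have "\<exists>Xj\<in>Xs. \<exists>Xi\<in>Xs. Xj \<noteq> Xi"
  proof (rule ccontr)
    assume "\<not> ?thesis"
    then have "\<forall>X\<in>Xs. \<forall>Y\<in>Xs. X = Y" by blast
    then have "card Xs \<le> 1" by (simp add: card_le_Suc0_iff_eq)
    then show False using K2 by simp
  qed
  then obtain Xi Xj where XX: "Xi \<in> Xs" "Xj \<in> Xs" "Xi \<noteq> Xj" by blast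
  obtain a0 where a0: "a0 \<in> Xi" using blk_ne[OF XX(1)] by blast
  obtain b0 where b0: "b0 \<in> Xj" using blk_ne[OF XX(2)] by blast
  have ab0: "(a0, b0) \<in> C"
    using XX a0 b0 blk_uniq unfolding C_def R_def by blast
  define \<delta> where "\<delta> = Min ((\<lambda>(a, b). dist_ab q a b) ` C)"
  have dpos: "\<delta> > 0" unfolding \<delta>_def using ab0 Cpos by (subst Min_gr_iff) auto
  have dle: "\<delta> \<le> dist_ab q a b" if "(a, b) \<in> C" for a b
    unfolding \<delta>_def using that by (intro Min_le) auto
  define \<epsilon> where "\<epsilon> = \<delta> / 2"
  have epos: "\<epsilon> > 0" using dpos by (simp add: \<epsilon>_def)
  have E1: "eventually (\<lambda>n. \<forall>x\<in>R. dist_ab (P n) (fst x) (snd x) < \<epsilon>) sequentially"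
  proof (intro eventually_ball_finite ballI)
    fix x assume "x \<in> R"
    then have "dist_ab q (fst x) (snd x) = 0" using dist_same unfolding R_def by auto
    then show "eventually (\<lambda>n. dist_ab (P n) (fst x) (snd x) < \<epsilon>) sequentially"
      using order_tendstoD(2)[OF conv_dist[of "fst x" "snd x"]] epos by simp
  qed simp
  have E2: "eventually (\<lambda>n. \<forall>x\<in>C. dist_ab (P n) (fst x) (snd x) > \<epsilon>) sequentially"
  proof (intro eventually_ball_finite ballI)
    fix x assume "x \<in> C"
    then have "dist_ab q (fst x) (snd x) > \<epsilon>" using dle[of "fst x" "snd x"] dpos by (simp add: \<epsilon>_def)
    then show "eventually (\<lambda>n. dist_ab (P n) (fst x) (snd x) > \<epsilon>) sequentially"
      using order_tendstoD(1)[OF conv_dist] by blast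
  qed simp
  define F where "F = {Ys. {} \<notin> Ys \<and> \<Union>Ys = UNIV \<and> Ys \<noteq> Xs}"
  have E3: "eventually (\<lambda>n. \<forall>Ys\<in>F. DD (P n) Xs < DD (P n) Ys) sequentially"
  proof (intro eventually_ball_finite ballI)
    fix Ys assume "Ys \<in> F"
    then have "DD q Ys > 0" using DD_pos unfolding F_def by blast
    then have "DD q Ys - DD q Xs > 0" using DD_Xs by simp
    moreover have "(\<lambda>n. DD (P n) Ys - DD (P n) Xs) \<longlonglongrightarrow> DD q Ys - DD q Xs"
      by (intro tendsto_diff conv_DD)
    ultimately have "eventually (\<lambda>n. DD (P n) Ys - DD (P n) Xs > 0) sequentially"
      using order_tendstoD(1) by blast
    then show "eventually (\<lambda>n. DD (P n) Xs < DD (P n) Ys) sequentially" by simp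
  qed simp
  have partXs: "partition_on UNIV Xs"
    using part unfolding is_partition_def partition_on_def disjoint_def by blast
  have quotR: "UNIV // R = Xs" unfolding R_def by (rule partition_on_eq_quotient[OF partXs])
  have transR: "trans R" unfolding R_def trans_def using blk_uniq by blast
  show ?thesis
  proof (rule eventually_mono[OF eventually_conj[OF E1 eventually_conj[OF E2 E3]]])
    fix n assume H: "(\<forall>x\<in>R. dist_ab (P n) (fst x) (snd x) < \<epsilon>) \<and>
      (\<forall>x\<in>C. dist_ab (P n) (fst x) (snd x) > \<epsilon>) \<and> (\<forall>Ys\<in>F. DD (P n) Xs < DD (P n) Ys)"
    have sim: "simrel (P n) \<epsilon> = R"
    proof (intro set_eqI iffI)
      fix x assume "x \<in> simrel (P n) \<epsilon>"
      then have lt: "dist_ab (P n) (fst x) (snd x) < \<epsilon>" by (auto simp: simrel_def)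
      show "x \<in> R"
      proof (rule ccontr)
        assume "x \<notin> R"
        then have "x \<in> C" unfolding C_def by (cases x) auto
        then have "\<epsilon> < dist_ab (P n) (fst x) (snd x)" using H by blast
        then show False using lt by simp
      qed
    next
      fix x assume "x \<in> R"
      then show "x \<in> simrel (P n) \<epsilon>" using H by (auto simp: simrel_def)
    qed
    have fin: "finite {dist_ab (P n) a b |a b. True}"
    proof -
      have "{dist_ab (P n) a b |a b. True} = (\<lambda>x. dist_ab (P n) (fst x) (snd x)) ` UNIV"
        by (auto simp: image_iff) (metis fst_conv snd_conv)
      then show ?thesis by simp
    qed
    have "\<epsilon> < dist_ab (P n) a0 b0" using H ab0 by auto
    also have "\<dots> \<le> epsbar (P n)" unfolding epsbar_def by (rule Max_ge[OF fin]) blast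
    finally have "\<epsilon> \<le> epsbar (P n)" by simp
    then have "Xs \<in> cands (P n)" unfolding cands_def using sim quotR transR epos by blast
    moreover have "\<forall>Ys\<in>cands (P n). Ys \<noteq> Xs \<longrightarrow> DD (P n) Xs < DD (P n) Ys"
      using H quot_cover unfolding F_def by blast
    ultimately show "Xs \<in> cands (P n) \<and> (\<forall>Ys\<in>cands (P n). Ys \<noteq> Xs \<longrightarrow> DD (P n) Xs < DD (P n) Ys)" ..
  qed
qed

end

end


theorem corollary2:
  fixes Xs :: "('a::finite) set set"
    and v :: "'a set \<Rightarrow> real" and u :: "'a \<Rightarrow> real"
    and pbar :: "'a \<Rightarrow> 'a set \<Rightarrow> real"
    and M :: "'w measure"
    and Ch :: "'a set \<Rightarrow> nat \<Rightarrow> 'w \<Rightarrow> 'a"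
    and N :: "'a set \<Rightarrow> nat \<Rightarrow> nat"
  assumes nsc: "is_NSC Xs v u pbar"
    and nondeg: "nondegenerate Xs v u"
    and K2: "card Xs \<ge> 2"
    and A1: "assumption1 Xs pbar"
    and prob: "prob_space M"
    and indep: "prob_space.indep_vars M (\<lambda>_. count_space UNIV) (\<lambda>(A, k). Ch A k) (menus \<times> UNIV)"
    and distr: "\<forall>A\<in>menus. \<forall>k. \<forall>a\<in>A. measure M {\<omega> \<in> space M. Ch A k \<omega> = a} = pbar a A"
    and nested: "\<forall>A\<in>menus. mono (N A)"
    and Nstar: "filterlim (\<lambda>n. Min ((\<lambda>A. N A n) ` menus)) at_top sequentially"
  shows "AE \<omega> in M. eventually (\<lambda>n.
            Xs \<in> cands (freq Ch N n \<omega>) \<and>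
            (\<forall>Ys \<in> cands (freq Ch N n \<omega>). Ys \<noteq> Xs \<longrightarrow>
                DD (freq Ch N n \<omega>) Xs < DD (freq Ch N n \<omega>) Ys)) sequentially"
proof -
  interpret nscset Xs v u pbar by unfold_locales (fact nsc nondeg K2 A1)+
  have s1: "\<forall>A\<in>menus. (\<Sum>a\<in>A. pbar a A) = 1" using sum1 by blast
  have AEc: "AE \<omega> in M. \<forall>A\<in>menus. \<forall>a. (\<lambda>n. freq Ch N n \<omega> a A) \<longlonglongrightarrow> (if a \<in> A then pbar a A else 0)"
    by (rule freq_conv[OF prob indep distr Nstar s1])
  show ?thesis
  proof (rule AE_mp[OF AEc], intro AE_I2 impI)
    fix \<omega> assume H: "\<forall>A\<in>menus. \<forall>a. (\<lambda>n. freq Ch N n \<omega> a A) \<longlonglongrightarrow> (if a \<in> A then pbar a A else 0)"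
    have H': "\<forall>A\<in>menus. \<forall>a. (\<lambda>n. freq Ch N n \<omega> a A) \<longlonglongrightarrow> q a A"
      using H by (simp add: q_def)
    show "eventually (\<lambda>n. Xs \<in> cands (freq Ch N n \<omega>) \<and>
            (\<forall>Ys \<in> cands (freq Ch N n \<omega>). Ys \<noteq> Xs \<longrightarrow>
                DD (freq Ch N n \<omega>) Xs < DD (freq Ch N n \<omega>) Ys)) sequentially"
      by (rule det_main[where P="\<lambda>n. freq Ch N n \<omega>", OF H'])
  qed
qed

end
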